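(* Let a witness (W, P, \Phi) be given, where W: \mathcal{N} \to \mathcal{E} assigns an invariant to every program location. The program is instrumented by inserting, at every location n with W n different from the trivial invariant true, a statement \mathrm{unassume}(W\,n). This statement is a no-op in the concrete semantics. In the abstract semantics it is interpreted by a sound abstract unassume operator, i.e. an operator satisfying \gamma\,d \subseteq \gamma(\llbracket \mathrm{unassume}_V(e) \rrbracket^\sharp d) for all d \in \mathbb{D}. Let \sigma_W: \mathcal{N} \to \mathbb{D} be the result of analyzing the instrumented program with an abstract interpreter that is sound for the original program. Suppose this analysis confirms the property \Phi, and suppose every invariant W\,n abstractly evaluates to true in \sigma_W. Then the witness is valid: every invariant W\,n holds at location n in every concrete execution of the original program, and the program satisfies \Phi.
   Context: Programs are abstractly interpreted over an abstract domain \mathbb{D} with concretization \gamma. The set of program locations is \mathcal{N}, and \mathcal{E} is the language of invariant expressions. A witness (W, P, \Phi) consists of W: \mathcal{N} \to \mathcal{E}, mapping locations to claimed invariants, together with the program P and the property \Phi that is claimed to hold. *)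

theory Defs
  imports Main
begin

record ('n, 'a, 's) prog =
  entry :: 'n
  init  :: "'s set"
  edges :: "('n \<times> 'a \<times> 'n) set"

inductive_set reach :: "('n, 'a, 's) prog \<Rightarrow> ('a \<Rightarrow> 's \<Rightarrow> 's set) \<Rightarrow> ('n \<times> 's) set"
  for P :: "('n, 'a, 's) prog" and sem :: "'a \<Rightarrow> 's \<Rightarrow> 's set" where
  reach_init: "s \<in> init P \<Longrightarrow> (entry P, s) \<in> reach P sem"
| reach_step: "(u, s) \<in> reach P sem \<Longrightarrow> (u, a, v) \<in> edges P \<Longrightarrow> s' \<in> sem a s
                 \<Longrightarrow> (v, s') \<in> reach P sem"

definition states_at :: "('n, 'a, 's) prog \<Rightarrow> ('a \<Rightarrow> 's \<Rightarrow> 's set) \<Rightarrow> 'n \<Rightarrow> 's set" where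
  "states_at P sem n = {s. (n, s) \<in> reach P sem}"

definition sound_transfer ::
  "('d \<Rightarrow> 's set) \<Rightarrow> ('a \<Rightarrow> 's \<Rightarrow> 's set) \<Rightarrow> ('a \<Rightarrow> 'd \<Rightarrow> 'd) \<Rightarrow> bool" where
  "sound_transfer \<gamma> sem asem \<longleftrightarrow> (\<forall>a d s. s \<in> \<gamma> d \<longrightarrow> sem a s \<subseteq> \<gamma> (asem a d))"

definition sound_unassume :: "('d \<Rightarrow> 's set) \<Rightarrow> ('e \<Rightarrow> 'd \<Rightarrow> 'd) \<Rightarrow> bool" where
  "sound_unassume \<gamma> unas \<longleftrightarrow> (\<forall>e d. \<gamma> d \<subseteq> \<gamma> (unas e d))"

text \<open>Result of an abstract interpretation of a program: a (post-)solution of the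
  abstract constraint system, i.e. initial states are covered at the entry and
  every edge's abstract transfer is covered by the target's abstract value.\<close>

definition abs_solution ::
  "('n, 'a, 's) prog \<Rightarrow> ('d \<Rightarrow> 's set) \<Rightarrow> ('a \<Rightarrow> 'd \<Rightarrow> 'd) \<Rightarrow> ('n \<Rightarrow> 'd) \<Rightarrow> bool" where
  "abs_solution P \<gamma> asem \<sigma> \<longleftrightarrow>
     init P \<subseteq> \<gamma> (\<sigma> (entry P)) \<and>
     (\<forall>u a v. (u, a, v) \<in> edges P \<longrightarrow> \<gamma> (asem a (\<sigma> u)) \<subseteq> \<gamma> (\<sigma> v))"

text \<open>Actions of the instrumented program are original actions or
  unassume statements; locations are original locations (Loc n) plus, for every n
  with a non-trivial invariant, an auxiliary location (Mid n) reached right after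
  executing unassume(W n) at n.\<close>

datatype ('a, 'e) iact = Orig 'a | Unassume 'e
datatype 'n iloc = Loc 'n | Mid 'n

definition instrument ::
  "'e \<Rightarrow> ('n \<Rightarrow> 'e) \<Rightarrow> ('n, 'a, 's) prog \<Rightarrow> ('n iloc, ('a, 'e) iact, 's) prog" where
  "instrument tt W P = \<lparr> entry = Loc (entry P), init = init P,
     edges = {(Loc u, Orig a, Loc v) | u a v. (u, a, v) \<in> edges P \<and> W u = tt}
           \<union> {(Loc u, Unassume (W u), Mid u) | u. W u \<noteq> tt}
           \<union> {(Mid u, Orig a, Loc v) | u a v. (u, a, v) \<in> edges P \<and> W u \<noteq> tt} \<rparr>"

fun isem :: "('a \<Rightarrow> 's \<Rightarrow> 's set) \<Rightarrow> ('a, 'e) iact \<Rightarrow> 's \<Rightarrow> 's set" where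
  "isem sem (Orig a) s = sem a s"
| "isem sem (Unassume e) s = {s}"

fun iasem :: "('a \<Rightarrow> 'd \<Rightarrow> 'd) \<Rightarrow> ('e \<Rightarrow> 'd \<Rightarrow> 'd) \<Rightarrow> ('a, 'e) iact \<Rightarrow> 'd \<Rightarrow> 'd" where
  "iasem asem unas (Orig a) d = asem a d"
| "iasem asem unas (Unassume e) d = unas e d"

text \<open>Witness validity: every invariant holds at its location in every concrete
  execution, and the program satisfies the property Phi (a predicate on the
  collecting semantics, i.e. on the states reachable at each location).\<close>

definition valid_witness ::
  "('e \<Rightarrow> 's \<Rightarrow> bool) \<Rightarrow> ('n \<Rightarrow> 'e) \<Rightarrow> ('n, 'a, 's) prog \<Rightarrow> ('a \<Rightarrow> 's \<Rightarrow> 's set)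
   \<Rightarrow> (('n \<Rightarrow> 's set) \<Rightarrow> bool) \<Rightarrow> bool" where
  "valid_witness eval W P sem \<Phi> \<longleftrightarrow>
     (\<forall>n s. (n, s) \<in> reach P sem \<longrightarrow> eval (W n) s) \<and> \<Phi> (states_at P sem)"

end

theory Submission
  imports Defs
begin

theorem mainTheorem1:
  fixes P :: "('n, 'a, 's) prog"
    and sem :: "'a \<Rightarrow> 's \<Rightarrow> 's set"
    and \<gamma> :: "'d \<Rightarrow> 's set"
    and asem :: "'a \<Rightarrow> 'd \<Rightarrow> 'd"
    and unas :: "'e \<Rightarrow> 'd \<Rightarrow> 'd"
    and eval :: "'e \<Rightarrow> 's \<Rightarrow> bool"
    and aeval :: "'e \<Rightarrow> 'd \<Rightarrow> bool"
    and tt :: 'e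
    and W :: "'n \<Rightarrow> 'e"
    and \<Phi> :: "('n \<Rightarrow> 's set) \<Rightarrow> bool"
    and confirms :: "('n \<Rightarrow> 'd) \<Rightarrow> bool"
    and \<sigma> :: "'n iloc \<Rightarrow> 'd"
  assumes tt_true: "\<And>s. eval tt s"
    and aeval_sound: "\<And>e d s. aeval e d \<Longrightarrow> s \<in> \<gamma> d \<Longrightarrow> eval e s"
    and confirms_sound: "\<And>\<tau> R. confirms \<tau> \<Longrightarrow> (\<And>n. R n \<subseteq> \<gamma> (\<tau> n)) \<Longrightarrow> \<Phi> R"
    and transfer_sound: "sound_transfer \<gamma> sem asem"
    and unassume_sound: "sound_unassume \<gamma> unas"
    and analysis: "abs_solution (instrument tt W P) \<gamma> (iasem asem unas) \<sigma>"
    and confirmed: "confirms (\<lambda>n. \<sigma> (Loc n))"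
    and invariants_checked: "\<And>n. aeval (W n) (\<sigma> (Loc n))"
  shows "valid_witness eval W P sem \<Phi>"
proof -
  have E: "init P \<subseteq> \<gamma> (\<sigma> (Loc (entry P)))"
    and T: "\<And>u a v. (u, a, v) \<in> edges (instrument tt W P) \<Longrightarrow>
              \<gamma> (iasem asem unas a (\<sigma> u)) \<subseteq> \<gamma> (\<sigma> v)"
    using analysis unfolding abs_solution_def
    by (simp add: instrument_def, blast)
  have key: "s \<in> \<gamma> (\<sigma> (Loc n))" if "(n, s) \<in> reach P sem" for n s
    using that
  proof (induction rule: reach.induct)
    case (reach_init s)
    then show ?case using E by auto
  next
    case (reach_step u s a v s')
    show ?case
    proof (cases "W u = tt")
      case True
      then have "(Loc u, Orig a, Loc v) \<in> edges (instrument tt W P)"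
        using reach_step by (auto simp: instrument_def)
      from T[OF this] reach_step transfer_sound show ?thesis
        unfolding sound_transfer_def by (simp, blast)
    next
      case False
      then have e1: "(Loc u, Unassume (W u), Mid u) \<in> edges (instrument tt W P)"
        and e2: "(Mid u, Orig a, Loc v) \<in> edges (instrument tt W P)"
        using reach_step by (auto simp: instrument_def)
      have "s \<in> \<gamma> (\<sigma> (Mid u))"
        using T[OF e1] reach_step unassume_sound by (auto simp: sound_unassume_def)
      with T[OF e2] reach_step transfer_sound show ?thesis
        unfolding sound_transfer_def by (simp, blast)
    qed
  qed
  show ?thesis
    unfolding valid_witness_def
  proof
    show "\<forall>n s. (n, s) \<in> reach P sem \<longrightarrow> eval (W n) s"
      using key aeval_sound invariants_checked by blast
    show "\<Phi> (states_at P sem)"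
      by (rule confirms_sound[OF confirmed]) (auto simp: states_at_def key)
  qed
qed

end
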